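(* Let $(H,\prec,\cdot,\succ,\Delta)$ be a connected $q$-tridendriform bialgebra and let $e_{tri}:H\to H$ be defined by $e_{tri}(x)=\sum_{n\ge1}(-1)^{n+1}\succ^n\circ\bar\Delta^n(x)$. Then for every $x\in H$, $e_{tri}(x)=x-\sum x_{(1)}\succ e_{tri}(x_{(2)})$ where $\bar\Delta(x)=\sum x_{(1)}\otimes x_{(2)}$; moreover $e_{tri}(x)=x$ for every primitive $x$, and $e_{tri}(y\succ z)=0$ for all $y,z\in H$.
   Context: $q$-tridendriform algebra: vector space $H$ with bilinear $\prec,\cdot,\succ$ satisfying (1) $(a\prec b)\prec c=a\prec(b\prec c+b\succ c+q\,b\cdot c)$; (2) $(a\succ b)\prec c=a\succ(b\prec c)$; (3) $(a\prec b+a\succ b+q\,a\cdot b)\succ c=a\succ(b\succ c)$; (4) $(a\cdot b)\cdot c=a\cdot(b\cdot c)$; (5) $(a\succ b)\cdot c=a\succ(b\cdot c)$; (6) $(a\prec b)\cdot c=a\cdot(b\succ c)$; (7) $(a\cdot b)\prec c=a\cdot(b\prec c)$; $*:=\prec+q\,\cdot+\succ$. Unit conventions: $H_+=H\oplus\mathbb{K}1$, $\epsilon$ the projection to $\mathbb{K}$; $x\succ1=x\cdot1=1\cdot x=1\prec x=0$, $1\succ x=x=x\prec1$, $1*x=x*1=x$, and $(x*y)\otimes(1\circ1):=(x\circ y)\otimes1$ for $\circ\in\{\succ,\cdot,\prec\}$. A $q$-tridendriform bialgebra is such $H$ with linear $\Delta:H_+\to H_+\otimes H_+$, $\Delta(1)=1\otimes1$,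 $(\epsilon\otimes\mathrm{Id})\Delta(x)=1\otimes x$, $(\mathrm{Id}\otimes\epsilon)\Delta(x)=x\otimes1$, and $\Delta(x\circ y)=\sum(x_{(1)}*y_{(1)})\otimes(x_{(2)}\circ y_{(2)})$ for $\circ\in\{\succ,\cdot,\prec\}$, $x,y\in H$. Primitive: $\Delta(x)=x\otimes1+1\otimes x$. Reduced coproduct $\bar\Delta(x)=\Delta(x)-x\otimes1-1\otimes x\in H\otimes H$ for $x\in H$. Filtration: $F_1(H)=\mathrm{Prim}(H)$, $F_n(H)=\{x\in H:\bar\Delta(x)\in F_{n-1}(H)\otimes F_{n-1}(H)\}$; $H$ is connected if $H=\bigcup_{n\ge1}F_n(H)$. $\succ^1=\mathrm{Id}$, $\succ^n=\succ^{n-1}\circ(\mathrm{Id}^{\otimes n-2}\otimes\succ):H^{\otimes n}\to H$ (so $\succ^n(x_1\otimes\cdots\otimes x_n)=x_1\succ(x_2\succ(\cdots\succ x_n))$); $\bar\Delta^1=\mathrm{Id}$, $\bar\Delta^n=(\mathrm{Id}^{\otimes n-2}\otimes\bar\Delta)\circ\bar\Delta^{n-1}:H\to H^{\otimes n}$. By connectedness the sum defining $e_{tri}$ is finite for each $x$. *)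

theory Defs
  imports Main "HOL.Vector_Spaces" "HOL-Library.Product_Plus"
begin

(* K = field 'k, H = type 'h with scalar multiplication sc (a K-vector space).
   H_+ = H \<oplus> K1 is represented by pairs (h, c) :: 'h \<times> 'k meaning h + c*1.
   Tensors in V \<otimes> W are represented by finite lists of pairs (finite sums of
   simple tensors); equality of tensors is tested against all bilinear forms
   V \<times> W \<rightarrow> K (which characterises equality in V \<otimes> W over a field). *)

definition psc :: "('k::field \<Rightarrow> 'h::ab_group_add \<Rightarrow> 'h) \<Rightarrow> 'k \<Rightarrow> 'h \<times> 'k \<Rightarrow> 'h \<times> 'k" where
  "psc sc c u = (sc c (fst u), c * snd u)"

definition bilin :: "('k::field \<Rightarrow> 'a::ab_group_add \<Rightarrow> 'a) \<Rightarrow> ('k \<Rightarrow> 'b::ab_group_add \<Rightarrow> 'b)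
    \<Rightarrow> ('k \<Rightarrow> 'c::ab_group_add \<Rightarrow> 'c) \<Rightarrow> ('a \<Rightarrow> 'b \<Rightarrow> 'c) \<Rightarrow> bool" where
  "bilin sa sb sc f \<longleftrightarrow>
     (\<forall>x x' y. f (x + x') y = f x y + f x' y) \<and>
     (\<forall>x y y'. f x (y + y') = f x y + f x y') \<and>
     (\<forall>c x y. f (sa c x) y = sc c (f x y)) \<and>
     (\<forall>c x y. f x (sb c y) = sc c (f x y))"

definition teq :: "('k::field \<Rightarrow> 'a::ab_group_add \<Rightarrow> 'a) \<Rightarrow> ('k \<Rightarrow> 'b::ab_group_add \<Rightarrow> 'b)
    \<Rightarrow> ('a \<times> 'b) list \<Rightarrow> ('a \<times> 'b) list \<Rightarrow> bool" where
  "teq sa sb T S \<longleftrightarrow> (\<forall>\<beta> :: 'a \<Rightarrow> 'b \<Rightarrow> 'k. bilin sa sb (*) \<beta> \<longrightarrow>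
       (\<Sum>(a, b)\<leftarrow>T. \<beta> a b) = (\<Sum>(a, b)\<leftarrow>S. \<beta> a b))"

definition star :: "('k::field \<Rightarrow> 'h::ab_group_add \<Rightarrow> 'h) \<Rightarrow> 'k \<Rightarrow> ('h \<Rightarrow> 'h \<Rightarrow> 'h)
    \<Rightarrow> ('h \<Rightarrow> 'h \<Rightarrow> 'h) \<Rightarrow> ('h \<Rightarrow> 'h \<Rightarrow> 'h) \<Rightarrow> 'h \<Rightarrow> 'h \<Rightarrow> 'h" where
  "star sc q lt dt gt x y = lt x y + sc q (dt x y) + gt x y"

definition q_tridendriform :: "('k::field \<Rightarrow> 'h::ab_group_add \<Rightarrow> 'h) \<Rightarrow> 'k \<Rightarrow> ('h \<Rightarrow> 'h \<Rightarrow> 'h)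
    \<Rightarrow> ('h \<Rightarrow> 'h \<Rightarrow> 'h) \<Rightarrow> ('h \<Rightarrow> 'h \<Rightarrow> 'h) \<Rightarrow> bool" where
  "q_tridendriform sc q lt dt gt \<longleftrightarrow>
     vector_space sc \<and> bilin sc sc sc lt \<and> bilin sc sc sc dt \<and> bilin sc sc sc gt \<and>
     (\<forall>a b c.
        lt (lt a b) c = lt a (lt b c + gt b c + sc q (dt b c)) \<and>
        lt (gt a b) c = gt a (lt b c) \<and>
        gt (lt a b + gt a b + sc q (dt a b)) c = gt a (gt b c) \<and>
        dt (dt a b) c = dt a (dt b c) \<and>
        dt (gt a b) c = gt a (dt b c) \<and>
        dt (lt a b) c = dt a (gt b c) \<and>
        lt (dt a b) c = dt a (lt b c))"

definition pstar :: "('k::field \<Rightarrow> 'h::ab_group_add \<Rightarrow> 'h) \<Rightarrow> 'k \<Rightarrow> ('h \<Rightarrow> 'h \<Rightarrow> 'h)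
    \<Rightarrow> ('h \<Rightarrow> 'h \<Rightarrow> 'h) \<Rightarrow> ('h \<Rightarrow> 'h \<Rightarrow> 'h) \<Rightarrow> 'h \<times> 'k \<Rightarrow> 'h \<times> 'k \<Rightarrow> 'h \<times> 'k" where
  "pstar sc q lt dt gt u v =
     (star sc q lt dt gt (fst u) (fst v) + sc (snd v) (fst u) + sc (snd u) (fst v), snd u * snd v)"

text \<open>An operation op on H extended to H_+ with the unit conventions:
  ru: whether x op 1 = x (otherwise 0); lu: whether 1 op x = x (otherwise 0).
  The value of 1 op 1 never matters (it only meets the K\<otimes>K-component of
  Delta(x), x in H, which is 0 by the counit axioms); it is set to 0.\<close>
definition pop :: "('k::field \<Rightarrow> 'h::ab_group_add \<Rightarrow> 'h) \<Rightarrow> ('h \<Rightarrow> 'h \<Rightarrow> 'h) \<Rightarrow> bool \<Rightarrow> bool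
    \<Rightarrow> 'h \<times> 'k \<Rightarrow> 'h \<times> 'k \<Rightarrow> 'h" where
  "pop sc op ru lu u v = op (fst u) (fst v) + (if ru then sc (snd v) (fst u) else 0)
                         + (if lu then sc (snd u) (fst v) else 0)"

text \<open>The tensor (a*c) \<otimes> (b op d) in H_+ \<otimes> H_+, for a\<otimes>b a term of Delta(x) and
  c\<otimes>d a term of Delta(y), with the conventions x op 1, 1 op x as above and
  (x*y)\<otimes>(1 op 1) := (x op y)\<otimes>1.\<close>
definition compat_term :: "('k::field \<Rightarrow> 'h::ab_group_add \<Rightarrow> 'h) \<Rightarrow> 'k \<Rightarrow> ('h \<Rightarrow> 'h \<Rightarrow> 'h)
    \<Rightarrow> ('h \<Rightarrow> 'h \<Rightarrow> 'h) \<Rightarrow> ('h \<Rightarrow> 'h \<Rightarrow> 'h) \<Rightarrow> ('h \<Rightarrow> 'h \<Rightarrow> 'h) \<Rightarrow> bool \<Rightarrow> bool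
    \<Rightarrow> ('h \<times> 'k) \<times> ('h \<times> 'k) \<Rightarrow> ('h \<times> 'k) \<times> ('h \<times> 'k) \<Rightarrow> (('h \<times> 'k) \<times> ('h \<times> 'k)) list" where
  "compat_term sc q lt dt gt op ru lu ab cd =
     (let a = fst ab; b = snd ab; c = fst cd; d = snd cd;
          ac = pstar sc q lt dt gt a c in
      [ (ac, (op (fst b) (fst d), 0)),
        (psc sc (snd d) ac, (if ru then fst b else 0, 0)),
        (psc sc (snd b) ac, (if lu then fst d else 0, 0)),
        ((pop sc op ru lu a c, 0), (0, snd b * snd d)) ])"

definition compat :: "('k::field \<Rightarrow> 'h::ab_group_add \<Rightarrow> 'h) \<Rightarrow> 'k \<Rightarrow> ('h \<Rightarrow> 'h \<Rightarrow> 'h)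
    \<Rightarrow> ('h \<Rightarrow> 'h \<Rightarrow> 'h) \<Rightarrow> ('h \<Rightarrow> 'h \<Rightarrow> 'h) \<Rightarrow> ('h \<times> 'k \<Rightarrow> (('h \<times> 'k) \<times> ('h \<times> 'k)) list)
    \<Rightarrow> ('h \<Rightarrow> 'h \<Rightarrow> 'h) \<Rightarrow> bool \<Rightarrow> bool \<Rightarrow> bool" where
  "compat sc q lt dt gt Delta op ru lu \<longleftrightarrow>
     (\<forall>x y. teq (psc sc) (psc sc) (Delta (op x y, 0))
        (concat (map (\<lambda>ab. concat (map (\<lambda>cd. compat_term sc q lt dt gt op ru lu ab cd)
                                       (Delta (y, 0))))
                     (Delta (x, 0)))))"

definition q_tridendriform_bialgebra :: "('k::field \<Rightarrow> 'h::ab_group_add \<Rightarrow> 'h) \<Rightarrow> 'k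
    \<Rightarrow> ('h \<Rightarrow> 'h \<Rightarrow> 'h) \<Rightarrow> ('h \<Rightarrow> 'h \<Rightarrow> 'h) \<Rightarrow> ('h \<Rightarrow> 'h \<Rightarrow> 'h)
    \<Rightarrow> ('h \<times> 'k \<Rightarrow> (('h \<times> 'k) \<times> ('h \<times> 'k)) list) \<Rightarrow> bool" where
  "q_tridendriform_bialgebra sc q lt dt gt Delta \<longleftrightarrow>
     q_tridendriform sc q lt dt gt \<and>
     \<comment> \<open>Delta : H_+ \<rightarrow> H_+ \<otimes> H_+ is linear\<close>
     (\<forall>u v. teq (psc sc) (psc sc) (Delta (u + v)) (Delta u @ Delta v)) \<and>
     (\<forall>c u. teq (psc sc) (psc sc) (Delta (psc sc c u)) (map (\<lambda>(a, b). (psc sc c a, b)) (Delta u))) \<and>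
     \<comment> \<open>Delta(1) = 1 \<otimes> 1\<close>
     teq (psc sc) (psc sc) (Delta (0, 1)) [((0, 1), (0, 1))] \<and>
     \<comment> \<open>counit conditions for x in H\<close>
     (\<forall>x. (\<Sum>(a, b)\<leftarrow>Delta (x, 0). psc sc (snd a) b) = (x, 0)) \<and>
     (\<forall>x. (\<Sum>(a, b)\<leftarrow>Delta (x, 0). psc sc (snd b) a) = (x, 0)) \<and>
     \<comment> \<open>compatibilities for \<prec> (x\<prec>1 = x, 1\<prec>x = 0), \<cdot> (both 0), \<succ> (x\<succ>1 = 0, 1\<succ>x = x)\<close>
     compat sc q lt dt gt Delta lt True False \<and>
     compat sc q lt dt gt Delta dt False False \<and>
     compat sc q lt dt gt Delta gt False True"

definition primitive :: "('k::field \<Rightarrow> 'h::ab_group_add \<Rightarrow> 'h)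
    \<Rightarrow> ('h \<times> 'k \<Rightarrow> (('h \<times> 'k) \<times> ('h \<times> 'k)) list) \<Rightarrow> 'h \<Rightarrow> bool" where
  "primitive sc Delta x \<longleftrightarrow>
     teq (psc sc) (psc sc) (Delta (x, 0)) [((x, 0), (0, 1)), ((0, 1), (x, 0))]"

text \<open>Reduced coproduct of x in H: the H\<otimes>H-component of Delta(x), which equals
  Delta(x) - x\<otimes>1 - 1\<otimes>x by the counit conditions.\<close>
definition rDelta :: "('h::ab_group_add \<times> 'k::field \<Rightarrow> (('h \<times> 'k) \<times> ('h \<times> 'k)) list) \<Rightarrow> 'h \<Rightarrow> ('h \<times> 'h) list" where
  "rDelta Delta x = map (\<lambda>(a, b). (fst a, fst b)) (Delta (x, 0))"

text \<open>Filtration F_n (F_0 = {} unused, F_1 = Prim(H)).\<close>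
primrec filt :: "('k::field \<Rightarrow> 'h::ab_group_add \<Rightarrow> 'h)
    \<Rightarrow> ('h \<times> 'k \<Rightarrow> (('h \<times> 'k) \<times> ('h \<times> 'k)) list) \<Rightarrow> nat \<Rightarrow> 'h set" where
  "filt sc Delta 0 = {}"
| "filt sc Delta (Suc n) =
     (if n = 0 then {x. primitive sc Delta x}
      else {x. \<exists>T. teq sc sc (rDelta Delta x) T \<and> set T \<subseteq> filt sc Delta n \<times> filt sc Delta n})"

definition connected_bialg :: "('k::field \<Rightarrow> 'h::ab_group_add \<Rightarrow> 'h)
    \<Rightarrow> ('h \<times> 'k \<Rightarrow> (('h \<times> 'k) \<times> ('h \<times> 'k)) list) \<Rightarrow> bool" where
  "connected_bialg sc Delta \<longleftrightarrow> (\<forall>x. \<exists>n\<ge>1. x \<in> filt sc Delta n)"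

text \<open>Iterated reduced coproduct: rDelta^1 = Id, rDelta^n = (Id^(n-2) \<otimes> rDelta) o rDelta^(n-1);
  an element of H^{\<otimes> n} is a list of simple tensors x_1\<otimes>...\<otimes>x_n (lists of length n).\<close>
primrec iterD :: "('h::ab_group_add \<times> 'k::field \<Rightarrow> (('h \<times> 'k) \<times> ('h \<times> 'k)) list) \<Rightarrow> nat \<Rightarrow> 'h \<Rightarrow> 'h list list" where
  "iterD Delta 0 x = []"
| "iterD Delta (Suc n) x =
     (if n = 0 then [[x]]
      else concat (map (\<lambda>t. map (\<lambda>(a, b). butlast t @ [a, b]) (rDelta Delta (last t)))
                       (iterD Delta n x)))"

fun gtn :: "('h::ab_group_add \<Rightarrow> 'h \<Rightarrow> 'h) \<Rightarrow> 'h list \<Rightarrow> 'h" where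
  "gtn gt [] = 0"
| "gtn gt [x] = x"
| "gtn gt (x # y # zs) = gt x (gtn gt (y # zs))"

definition etri_term :: "('k::field \<Rightarrow> 'h::ab_group_add \<Rightarrow> 'h) \<Rightarrow> ('h \<Rightarrow> 'h \<Rightarrow> 'h)
    \<Rightarrow> ('h \<times> 'k \<Rightarrow> (('h \<times> 'k) \<times> ('h \<times> 'k)) list) \<Rightarrow> nat \<Rightarrow> 'h \<Rightarrow> 'h" where
  "etri_term sc gt Delta n x = sc ((-1) ^ (n + 1)) (\<Sum>t\<leftarrow>iterD Delta n x. gtn gt t)"

text \<open>e_tri(x) = sum over n \<ge> 1 of the terms; only finitely many are nonzero
  in a connected bialgebra, so we sum over the (finite) support.\<close>
definition e_tri :: "('k::field \<Rightarrow> 'h::ab_group_add \<Rightarrow> 'h) \<Rightarrow> ('h \<Rightarrow> 'h \<Rightarrow> 'h)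
    \<Rightarrow> ('h \<times> 'k \<Rightarrow> (('h \<times> 'k) \<times> ('h \<times> 'k)) list) \<Rightarrow> 'h \<Rightarrow> 'h" where
  "e_tri sc gt Delta x = (\<Sum>n | 1 \<le> n \<and> etri_term sc gt Delta n x \<noteq> 0. etri_term sc gt Delta n x)"

end

theory Submission
  imports Defs
begin


lemma separation:
  fixes sc :: "'k::field \<Rightarrow> 'h::ab_group_add \<Rightarrow> 'h"
  assumes vs: "vector_space sc" and w: "w \<noteq> 0"
  shows "\<exists>f::'h\<Rightarrow>'k. (\<forall>x y. f (x + y) = f x + f y) \<and> (\<forall>c x. f (sc c x) = c * f x) \<and> f w \<noteq> 0"
proof -
  interpret vector_space sc by fact
  have ind: "independent {w}" using w by (simp add: independent_insert span_empty)
  define B where "B = extend_basis {w}"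
  have iB: "independent B" unfolding B_def using independent_extend_basis[OF ind] .
  have sB: "span B = UNIV" unfolding B_def using span_extend_basis[OF ind] .
  have wB: "w \<in> B" unfolding B_def using extend_basis_superset[OF ind] by auto
  show ?thesis
    apply (rule exI[of _ "\<lambda>v. representation B v w"])
    using representation_add[OF iB] representation_scale[OF iB] representation_basis[OF iB wB] sB
    by auto
qed

definition lin :: "('k::field \<Rightarrow> 'a::ab_group_add \<Rightarrow> 'a) \<Rightarrow> ('k \<Rightarrow> 'b::ab_group_add \<Rightarrow> 'b) \<Rightarrow> ('a \<Rightarrow> 'b) \<Rightarrow> bool" where
  "lin sa sb f \<longleftrightarrow> (\<forall>x y. f (x + y) = f x + f y) \<and> (\<forall>c x. f (sa c x) = sb c (f x))"

lemma addhom_zero: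
  fixes f :: "'a::ab_group_add \<Rightarrow> 'b::ab_group_add"
  assumes "\<And>x y. f (x + y) = f x + f y" shows "f 0 = 0"
  using assms[of 0 0] by simp

lemma addhom_sum_list:
  fixes f :: "'a::ab_group_add \<Rightarrow> 'b::ab_group_add"
  assumes "\<And>x y. f (x + y) = f x + f y" shows "f (sum_list xs) = sum_list (map f xs)"
  by (induct xs) (auto simp: assms addhom_zero[OF assms])

lemma addhom_sum_list_map:
  fixes f :: "'a::ab_group_add \<Rightarrow> 'b::ab_group_add"
  assumes "\<And>x y. f (x + y) = f x + f y" shows "f (\<Sum>x\<leftarrow>xs. g x) = (\<Sum>x\<leftarrow>xs. f (g x))"
  using addhom_sum_list[of f "map g xs", OF assms] by (simp add: o_def)

lemma addhom_neg:
  fixes f :: "'a::ab_group_add \<Rightarrow> 'b::ab_group_add"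
  assumes "\<And>x y. f (x + y) = f x + f y" shows "f (- x) = - f x"
  using assms[of x "-x"] addhom_zero[OF assms] by (metis add.commute add_left_cancel add.right_inverse)

lemma bilin_l: "bilin sa sb sc f \<Longrightarrow> f (x + x') y = f x y + f x' y"
  and bilin_r: "bilin sa sb sc f \<Longrightarrow> f x (y + y') = f x y + f x y'"
  and bilin_sl: "bilin sa sb sc f \<Longrightarrow> f (sa c x) y = sc c (f x y)"
  and bilin_sr: "bilin sa sb sc f \<Longrightarrow> f x (sb c y) = sc c (f x y)"
  unfolding bilin_def by auto

lemma bilin_zero_l: "bilin sa sb sc f \<Longrightarrow> f 0 y = 0"
  using addhom_zero[of "\<lambda>x. f x y"] bilin_l by metis
lemma bilin_zero_r: "bilin sa sb sc f \<Longrightarrow> f x 0 = 0"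
  using addhom_zero[of "\<lambda>y. f x y"] bilin_r by metis

lemma bilin_sum_l: "bilin sa sb sc f \<Longrightarrow> f (\<Sum>x\<leftarrow>xs. g x) y = (\<Sum>x\<leftarrow>xs. f (g x) y)"
  using addhom_sum_list_map[of "\<lambda>x. f x y"] bilin_l by metis
lemma bilin_sum_r: "bilin sa sb sc f \<Longrightarrow> f x (\<Sum>y\<leftarrow>ys. g y) = (\<Sum>y\<leftarrow>ys. f x (g y))"
  using addhom_sum_list_map[of "\<lambda>y. f x y"] bilin_r by metis

lemma bilin_comp:
  assumes "bilin sa' sb' sv F" "lin sa sa' f" "lin sb sb' g"
  shows "bilin sa sb sv (\<lambda>u v. F (f u) (g v))"
  using assms unfolding bilin_def lin_def by auto

lemma bilin_add:
  fixes sv :: "'k::field \<Rightarrow> 'c::ab_group_add \<Rightarrow> 'c"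
  assumes "vector_space sv" "bilin sa sb sv F" "bilin sa sb sv G"
  shows "bilin sa sb sv (\<lambda>u v. F u v + G u v)"
proof -
  interpret vector_space sv by fact
  show ?thesis using assms unfolding bilin_def by (auto simp: scale_right_distrib algebra_simps)
qed

lemma bilin_zero:
  fixes sv :: "'k::field \<Rightarrow> 'c::ab_group_add \<Rightarrow> 'c"
  assumes "vector_space sv"
  shows "bilin sa sb sv (\<lambda>u v. 0)"
proof -
  interpret vector_space sv by fact
  show ?thesis unfolding bilin_def by auto
qed

lemma bilin_sum_list:
  fixes sv :: "'k::field \<Rightarrow> 'c::ab_group_add \<Rightarrow> 'c"
  assumes "vector_space sv" "\<And>p. p \<in> set L \<Longrightarrow> bilin sa sb sv (F p)"
  shows "bilin sa sb sv (\<lambda>u v. \<Sum>p\<leftarrow>L. F p u v)"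
  using assms(2)
proof (induct L)
  case Nil then show ?case using bilin_zero[OF assms(1)] by simp
next
  case (Cons a L)
  then show ?case using bilin_add[OF assms(1), of sa sb "F a" "\<lambda>u v. \<Sum>p\<leftarrow>L. F p u v"] by simp
qed

lemma bilin_scale:
  fixes sv :: "'k::field \<Rightarrow> 'c::ab_group_add \<Rightarrow> 'c"
  assumes "vector_space sv" "bilin sa sb sv F"
  shows "bilin sa sb sv (\<lambda>u v. sv k (F u v))"
proof -
  interpret vector_space sv by fact
  show ?thesis using assms unfolding bilin_def by (auto simp: scale_right_distrib mult.commute)
qed

lemma bilin_neg:
  fixes sv :: "'k::field \<Rightarrow> 'c::ab_group_add \<Rightarrow> 'c"
  assumes "vector_space sv" "bilin sa sb sv F"
  shows "bilin sa sb sv (\<lambda>u v. - F u v)"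
proof -
  interpret vector_space sv by fact
  show ?thesis using assms unfolding bilin_def by (auto simp: add.commute)
qed

lemma teq_sum_vec:
  fixes sv :: "'k::field \<Rightarrow> 'c::ab_group_add \<Rightarrow> 'c"
    and sa :: "'k \<Rightarrow> 'a::ab_group_add \<Rightarrow> 'a" and sb :: "'k \<Rightarrow> 'b::ab_group_add \<Rightarrow> 'b"
  assumes vs: "vector_space sv" and t: "teq sa sb T S" and b: "bilin sa sb sv F"
  shows "(\<Sum>(a, b)\<leftarrow>T. F a b) = (\<Sum>(a, b)\<leftarrow>S. F a b)"
proof (rule ccontr)
  assume ne: "(\<Sum>(a, b)\<leftarrow>T. F a b) \<noteq> (\<Sum>(a, b)\<leftarrow>S. F a b)"
  then obtain f :: "'c \<Rightarrow> 'k" where fa: "\<And>x y. f (x + y) = f x + f y" and fs: "\<And>c x. f (sv c x) = c * f x"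
    and fw: "f ((\<Sum>(a, b)\<leftarrow>T. F a b) - (\<Sum>(a, b)\<leftarrow>S. F a b)) \<noteq> 0"
    using separation[OF vs, of "(\<Sum>(a, b)\<leftarrow>T. F a b) - (\<Sum>(a, b)\<leftarrow>S. F a b)"] by auto
  have bb: "bilin sa sb (*) (\<lambda>a b. f (F a b))"
    using b unfolding bilin_def by (auto simp: fa fs)
  have "(\<Sum>(a, b)\<leftarrow>T. f (F a b)) = (\<Sum>(a, b)\<leftarrow>S. f (F a b))"
    using t bb unfolding teq_def by blast
  moreover have "f (\<Sum>(a, b)\<leftarrow>T. F a b) = (\<Sum>(a, b)\<leftarrow>T. f (F a b))" for T
    using addhom_sum_list_map[of f "case_prod F" T, OF fa] by (simp add: split_def)
  moreover have "f (x - y) = f x - f y" for x y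
    using fa[of "x - y" y] by simp
  ultimately show False using fw by simp
qed

lemma teq_proj:
  fixes sc :: "'k::field \<Rightarrow> 'h::ab_group_add \<Rightarrow> 'h"
  assumes "teq (psc sc) (psc sc) D E"
  shows "teq sc sc (map (\<lambda>(a, b). (fst a, fst b)) D) (map (\<lambda>(a, b). (fst a, fst b)) E)"
  unfolding teq_def
proof (intro allI impI)
  fix \<beta> :: "'h \<Rightarrow> 'h \<Rightarrow> 'k" assume b: "bilin sc sc (*) \<beta>"
  have "bilin (psc sc) (psc sc) (*) (\<lambda>u v. \<beta> (fst u) (fst v))"
    using b unfolding bilin_def psc_def by auto
  then have "(\<Sum>(a, b)\<leftarrow>D. \<beta> (fst a) (fst b)) = (\<Sum>(a, b)\<leftarrow>E. \<beta> (fst a) (fst b))"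
    using assms unfolding teq_def by blast
  then show "(\<Sum>(a, b)\<leftarrow>map (\<lambda>(a, b). (fst a, fst b)) D. \<beta> a b) = (\<Sum>(a, b)\<leftarrow>map (\<lambda>(a, b). (fst a, fst b)) E. \<beta> a b)"
    by (simp add: o_def split_def)
qed



locale qtb =
  fixes sc :: "'k::field \<Rightarrow> 'h::ab_group_add \<Rightarrow> 'h" and q :: 'k and lt dt gt :: "'h \<Rightarrow> 'h \<Rightarrow> 'h"
    and Delta :: "'h \<times> 'k \<Rightarrow> (('h \<times> 'k) \<times> ('h \<times> 'k)) list"
  assumes bialg: "q_tridendriform_bialgebra sc q lt dt gt Delta"
    and conn: "connected_bialg sc Delta"
begin

lemma tri: "q_tridendriform sc q lt dt gt" using bialg unfolding q_tridendriform_bialgebra_def by auto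
lemma vs: "vector_space sc" using tri unfolding q_tridendriform_def by auto
lemma bil_lt: "bilin sc sc sc lt" and bil_dt: "bilin sc sc sc dt" and bil_gt: "bilin sc sc sc gt"
  using tri unfolding q_tridendriform_def by auto
lemma ax3: "gt (lt a b + gt a b + sc q (dt a b)) c = gt a (gt b c)"
  using tri unfolding q_tridendriform_def by auto

sublocale vector_space sc by (rule vs)

lemmas gt_simps[simp] = bilin_l[OF bil_gt] bilin_r[OF bil_gt] bilin_sl[OF bil_gt] bilin_sr[OF bil_gt]
  bilin_zero_l[OF bil_gt] bilin_zero_r[OF bil_gt]
lemmas lt_simps[simp] = bilin_l[OF bil_lt] bilin_r[OF bil_lt] bilin_sl[OF bil_lt] bilin_sr[OF bil_lt]
  bilin_zero_l[OF bil_lt] bilin_zero_r[OF bil_lt]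
lemmas dt_simps[simp] = bilin_l[OF bil_dt] bilin_r[OF bil_dt] bilin_sl[OF bil_dt] bilin_sr[OF bil_dt]
  bilin_zero_l[OF bil_dt] bilin_zero_r[OF bil_dt]

abbreviation "rD \<equiv> rDelta Delta"
abbreviation "T \<equiv> etri_term sc gt Delta"
abbreviation "E \<equiv> e_tri sc gt Delta"

lemma gt_neg_r[simp]: "gt a (- v) = - gt a v"
  using addhom_neg[of "gt a"] by simp
lemma gt_sum_r: "gt a (\<Sum>x\<leftarrow>xs. g x) = (\<Sum>x\<leftarrow>xs. gt a (g x))"
  using bilin_sum_r[OF bil_gt] .
lemma sc_sum: "sc c (\<Sum>x\<leftarrow>xs. g x) = (\<Sum>x\<leftarrow>xs. sc c (g x))"
  using addhom_sum_list_map[of "sc c"] by (simp add: scale_right_distrib)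

lemma iterD_len: "t \<in> set (iterD Delta n x) \<Longrightarrow> length t = n"
proof (induct n arbitrary: t)
  case 0 then show ?case by simp
next
  case (Suc n)
  show ?case
  proof (cases "n = 0")
    case True then show ?thesis using Suc by simp
  next
    case False
    then show ?thesis using Suc by (auto simp: split_def)
  qed
qed

lemma concat_cons_aux:
  assumes "\<forall>s\<in>set L. s \<noteq> []"
  shows "concat (map (\<lambda>t. map (\<lambda>(a, b). butlast t @ [a, b]) (rD (last t))) (map ((#) c) L))
       = map ((#) c) (concat (map (\<lambda>t. map (\<lambda>(a, b). butlast t @ [a, b]) (rD (last t))) L))"
  using assms by (induct L) (auto simp: split_def)

lemma iterD_Suc: "n \<ge> 1 \<Longrightarrow> iterD Delta (Suc n) x = concat (map (\<lambda>(a, b). map ((#) a) (iterD Delta n b)) (rD x))"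
proof (induct n arbitrary: x)
  case 0 then show ?case by simp
next
  case (Suc n)
  show ?case
  proof (cases "n = 0")
    case True
    have "concat (map (\<lambda>(a, b). [[a, b]]) L) = map (\<lambda>(a, b). [a, b]) L" for L :: "('h\<times>'h) list"
      by (induct L) auto
    then show ?thesis using True by (simp add: split_def)
  next
    case False
    have ne: "\<forall>s\<in>set (iterD Delta n b). s \<noteq> []" for b using iterD_len[of _ n b] False by auto
    have "iterD Delta (Suc (Suc n)) x =
        concat (map (\<lambda>t. map (\<lambda>(a, b). butlast t @ [a, b]) (rD (last t))) (iterD Delta (Suc n) x))"
      by simp
    also have "\<dots> = concat (map (\<lambda>t. map (\<lambda>(a, b). butlast t @ [a, b]) (rD (last t)))
          (concat (map (\<lambda>(a, b). map ((#) a) (iterD Delta n b)) (rD x))))"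
      using Suc False by simp
    also have "\<dots> = concat (map (\<lambda>(a, b). map ((#) a) (iterD Delta (Suc n) b)) (rD x))"
    proof -
      have g: "concat (map f (concat (map G L))) = concat (map (\<lambda>p. concat (map f (G p))) L)"
        for f :: "'h list \<Rightarrow> 'h list list" and G and L :: "('h\<times>'h) list"
        by (induct L) auto
      show ?thesis unfolding g
        apply (rule arg_cong[where f=concat])
        apply (rule map_cong[OF refl])
        using concat_cons_aux[OF ne] False by (auto simp: split_def)
    qed
    finally show ?thesis .
  qed
qed

lemma gtn_cons: "s \<noteq> [] \<Longrightarrow> gtn gt (a # s) = gt a (gtn gt s)"
  by (cases s) auto

lemma S_Suc: "n \<ge> 1 \<Longrightarrow> (\<Sum>t\<leftarrow>iterD Delta (Suc n) x. gtn gt t)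
   = (\<Sum>(a, b)\<leftarrow>rD x. gt a (\<Sum>t\<leftarrow>iterD Delta n b. gtn gt t))"
proof -
  assume n: "n \<ge> 1"
  have ne: "s \<in> set (iterD Delta n b) \<Longrightarrow> s \<noteq> []" for s b using iterD_len[of s n b] n by auto
  have "(\<Sum>t\<leftarrow>concat (map (\<lambda>(a, b). map ((#) a) (iterD Delta n b)) L). gtn gt t)
     = (\<Sum>(a, b)\<leftarrow>L. gt a (\<Sum>t\<leftarrow>iterD Delta n b. gtn gt t))" for L
  proof (induct L)
    case Nil then show ?case by simp
  next
    case (Cons p L)
    obtain a b where p: "p = (a, b)" by force
    have "(\<Sum>t\<leftarrow>iterD Delta n b. gtn gt (a # t)) = (\<Sum>t\<leftarrow>iterD Delta n b. gt a (gtn gt t))"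
      by (rule arg_cong[where f=sum_list], rule map_cong) (auto simp: gtn_cons ne)
    then show ?case using Cons by (simp add: p o_def gt_sum_r)
  qed
  then show ?thesis using iterD_Suc[OF n] by simp
qed

lemma sc_gt_sum: "sc c (\<Sum>(a, b)\<leftarrow>L. gt a (f b)) = (\<Sum>(a, b)\<leftarrow>L. gt a (sc c (f b)))"
  by (induct L) (auto simp: scale_right_distrib)

lemma T_1[simp]: "T (Suc 0) x = x"
  by (simp add: etri_term_def)

lemma T_Suc: "n \<ge> 1 \<Longrightarrow> T (Suc n) x = - (\<Sum>(a, b)\<leftarrow>rD x. gt a (T n b))"
proof -
  assume n: "n \<ge> 1"
  let ?S = "\<lambda>b. (\<Sum>t\<leftarrow>iterD Delta n b. gtn gt t)"
  have "T (Suc n) x = sc ((-1) ^ (n + 2)) (\<Sum>(a, b)\<leftarrow>rD x. gt a (?S b))"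
    unfolding etri_term_def using S_Suc[OF n] by simp
  also have "\<dots> = (\<Sum>(a, b)\<leftarrow>rD x. gt a (sc ((-1) ^ (n + 2)) (?S b)))"
    by (rule sc_gt_sum)
  also have "\<dots> = (\<Sum>(a, b)\<leftarrow>rD x. - gt a (T n b))"
    unfolding etri_term_def by (rule arg_cong[where f=sum_list], rule map_cong) (auto simp: split_def)
  also have "\<dots> = - (\<Sum>(a, b)\<leftarrow>rD x. gt a (T n b))"
    using addhom_sum_list_map[of uminus "\<lambda>p. gt (fst p) (T n (snd p))" "rD x"] by (simp add: split_def)
  finally show ?thesis .
qed

lemma Delta_add: "teq (psc sc) (psc sc) (Delta (u + v)) (Delta u @ Delta v)"
  using bialg unfolding q_tridendriform_bialgebra_def by blast
lemma Delta_scale: "teq (psc sc) (psc sc) (Delta (psc sc c u)) (map (\<lambda>(a, b). (psc sc c a, b)) (Delta u))"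
  using bialg unfolding q_tridendriform_bialgebra_def by blast

lemma rD_add: "teq sc sc (rD (u + v)) (rD u @ rD v)"
proof -
  have "(u + v, 0::'k) = (u, 0) + (v, 0)" by simp
  then show ?thesis using teq_proj[OF Delta_add[of "(u, 0)" "(v, 0)"]] unfolding rDelta_def by simp
qed

lemma rD_scale: "teq sc sc (rD (sc c u)) (map (\<lambda>(a, b). (sc c a, b)) (rD u))"
proof -
  have "psc sc c (u, 0) = (sc c u, 0)" by (simp add: psc_def)
  then show ?thesis using teq_proj[OF Delta_scale[of c "(u, 0)"]] unfolding rDelta_def
    by (simp add: o_def split_def psc_def)
qed

lemma lin_id: "lin sc sc (\<lambda>x. x)" unfolding lin_def by auto

lemma lin_sumrD:
  assumes b: "bilin sc sc sc \<phi>"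
  shows "lin sc sc (\<lambda>x. \<Sum>(a, b)\<leftarrow>rD x. \<phi> a b)"
  unfolding lin_def
proof (intro conjI allI)
  fix u v
  show "(\<Sum>(a, b)\<leftarrow>rD (u + v). \<phi> a b) = (\<Sum>(a, b)\<leftarrow>rD u. \<phi> a b) + (\<Sum>(a, b)\<leftarrow>rD v. \<phi> a b)"
    using teq_sum_vec[OF vs rD_add b] by simp
next
  fix c u
  have "(\<Sum>(a, b)\<leftarrow>rD (sc c u). \<phi> a b) = (\<Sum>(a, b)\<leftarrow>map (\<lambda>(a, b). (sc c a, b)) (rD u). \<phi> a b)"
    using teq_sum_vec[OF vs rD_scale b] by simp
  also have "\<dots> = (\<Sum>(a, b)\<leftarrow>rD u. sc c (\<phi> a b))"
    by (simp add: o_def split_def bilin_sl[OF b])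
  also have "\<dots> = sc c (\<Sum>(a, b)\<leftarrow>rD u. \<phi> a b)"
    using sc_sum[of c "case_prod \<phi>" "rD u"] by (simp add: split_def)
  finally show "(\<Sum>(a, b)\<leftarrow>rD (sc c u). \<phi> a b) = sc c (\<Sum>(a, b)\<leftarrow>rD u. \<phi> a b)" .
qed

lemma lin_T: "n \<ge> 1 \<Longrightarrow> lin sc sc (T n)"
proof (induct n rule: dec_induct)
  case base
  show ?case unfolding lin_def by simp
next
  case (step n)
  have b: "bilin sc sc sc (\<lambda>a b. gt a (T n b))"
    using bilin_comp[OF bil_gt lin_id step(3)] .
  have l: "lin sc sc (\<lambda>x. \<Sum>(a, b)\<leftarrow>rD x. gt a (T n b))" using lin_sumrD[OF b] .
  have eq: "T (Suc n) = (\<lambda>x. - (\<Sum>(a, b)\<leftarrow>rD x. gt a (T n b)))"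
    using T_Suc[OF step(1)] by auto
  show ?case unfolding eq using l unfolding lin_def by auto
qed

lemma sum_list_zeros: "(\<And>p. p \<in> set L \<Longrightarrow> f p = (0::'a::monoid_add)) \<Longrightarrow> (\<Sum>p\<leftarrow>L. f p) = 0"
  by (induct L) auto

lemma bil_T: "n \<ge> 1 \<Longrightarrow> bilin sc sc sc (\<lambda>a b. gt a (T n b))"
  using bilin_comp[OF bil_gt lin_id lin_T] by blast

lemma prim_rD: "primitive sc Delta x \<Longrightarrow> teq sc sc (rD x) []"
proof -
  assume "primitive sc Delta x"
  then have "teq sc sc (rD x) [(x, 0), (0, x)]"
    using teq_proj unfolding primitive_def rDelta_def by fastforce
  then show ?thesis unfolding teq_def using bilin_zero_l bilin_zero_r by fastforce
qed

lemma filt_rep: assumes x: "x \<in> filt sc Delta j" shows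
   "\<exists>Tl. teq sc sc (rD x) Tl \<and> set Tl \<subseteq> filt sc Delta (j - 1) \<times> filt sc Delta (j - 1)"
proof (cases j)
  case 0 then show ?thesis using x by simp
next
  case (Suc m)
  show ?thesis
  proof (cases "m = 0")
    case True
    then show ?thesis using x Suc prim_rD by (intro exI[of _ "[]"]) auto
  next
    case False
    then show ?thesis using x Suc by auto
  qed
qed

lemma vanish: "x \<in> filt sc Delta j \<Longrightarrow> j < n \<Longrightarrow> T n x = 0"
proof (induct j arbitrary: x n)
  case 0 then show ?case by simp
next
  case (Suc j)
  obtain m where n: "n = Suc m" and m: "m \<ge> 1" using Suc(3) by (cases n) auto
  obtain Tl where Tl: "teq sc sc (rD x) Tl" "set Tl \<subseteq> filt sc Delta j \<times> filt sc Delta j"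
    using filt_rep[OF Suc(2)] by auto
  have "T n x = - (\<Sum>(a, b)\<leftarrow>rD x. gt a (T m b))" using T_Suc[OF m] n by simp
  also have "\<dots> = - (\<Sum>(a, b)\<leftarrow>Tl. gt a (T m b))" using teq_sum_vec[OF vs Tl(1) bil_T[OF m]] by simp
  also have "\<dots> = 0"
    using Tl(2) Suc(1)[of _ m] Suc(3) n by (auto intro!: sum_list_zeros)
  finally show ?case .
qed

lemma vanish_ex: "\<exists>N. \<forall>n>N. T n x = 0"
  using conn vanish unfolding connected_bialg_def by blast

lemma E_eq: "(\<And>n. n > N \<Longrightarrow> T n x = 0) \<Longrightarrow> E x = (\<Sum>n<N. T (Suc n) x)"
proof -
  assume z: "\<And>n. n > N \<Longrightarrow> T n x = 0"
  have "E x = (\<Sum>n\<in>{Suc 0..N}. T n x)"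
    unfolding e_tri_def
    by (rule sum.mono_neutral_left) (auto simp: z intro: ccontr dest: z)
  also have "\<dots> = (\<Sum>n<N. T (Suc n) x)" by (rule sum.atLeast1_atMost_eq)
  finally show ?thesis .
qed

lemma vanish_list: "\<exists>N. \<forall>p\<in>set L. \<forall>n>N. T n (f p) = 0"
proof (induct L)
  case Nil then show ?case by simp
next
  case (Cons a L)
  obtain N1 where N1: "\<forall>p\<in>set L. \<forall>n>N1. T n (f p) = 0" using Cons by blast
  obtain N2 where N2: "\<forall>n>N2. T n (f a) = 0" using vanish_ex by blast
  show ?case using N1 N2 by (intro exI[of _ "max N1 N2"]) auto
qed

lemma lin_E: "lin sc sc E"
  unfolding lin_def
proof (intro conjI allI)
  fix u v
  obtain N1 where N1: "\<forall>n>N1. T n u = 0" using vanish_ex by blast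
  obtain N2 where N2: "\<forall>n>N2. T n v = 0" using vanish_ex by blast
  obtain N3 where N3: "\<forall>n>N3. T n (u + v) = 0" using vanish_ex by blast
  let ?N = "max N1 (max N2 N3)"
  have "E (u + v) = (\<Sum>n<?N. T (Suc n) (u + v))" by (rule E_eq) (use N3 in auto)
  also have "\<dots> = (\<Sum>n<?N. T (Suc n) u + T (Suc n) v)"
    by (rule sum.cong) (use lin_T[of "Suc _"] in \<open>auto simp: lin_def\<close>)
  also have "\<dots> = (\<Sum>n<?N. T (Suc n) u) + (\<Sum>n<?N. T (Suc n) v)" by (rule sum.distrib)
  also have "\<dots> = E u + E v"
    using E_eq[of ?N u] E_eq[of ?N v] N1 N2 by auto
  finally show "E (u + v) = E u + E v" .
next
  fix c u
  obtain N1 where N1: "\<forall>n>N1. T n u = 0" using vanish_ex by blast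
  obtain N3 where N3: "\<forall>n>N3. T n (sc c u) = 0" using vanish_ex by blast
  let ?N = "max N1 N3"
  have "E (sc c u) = (\<Sum>n<?N. T (Suc n) (sc c u))" by (rule E_eq) (use N3 in auto)
  also have "\<dots> = (\<Sum>n<?N. sc c (T (Suc n) u))"
    by (rule sum.cong) (use lin_T[of "Suc _"] in \<open>auto simp: lin_def\<close>)
  also have "\<dots> = sc c (\<Sum>n<?N. T (Suc n) u)" by (rule scale_sum_right[symmetric])
  also have "\<dots> = sc c (E u)"
    using E_eq[of ?N u] N1 by auto
  finally show "E (sc c u) = sc c (E u)" .
qed

lemma E_zero[simp]: "E 0 = 0"
  using addhom_zero[of E] lin_E unfolding lin_def by blast

lemma bil_E: "bilin sc sc sc (\<lambda>a b. gt a (E b))"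
  using bilin_comp[OF bil_gt lin_id lin_E] .

lemma gt_sum_set: "gt a (\<Sum>n<(N::nat). g n) = (\<Sum>n<N. gt a (g n))"
  by (induct N) auto

lemma swap_sum: "(\<Sum>(a, b)\<leftarrow>L. (\<Sum>n<(N::nat). f a b n)) = (\<Sum>n<N. (\<Sum>(a, b)\<leftarrow>L. f a b n))"
  by (induct L) (auto simp: sum.distrib)

theorem E_rec: "E x = x - (\<Sum>(a, b)\<leftarrow>rD x. gt a (E b))"
proof -
  obtain N1 where N1: "\<forall>n>N1. T n x = 0" using vanish_ex by blast
  obtain N2 where N2: "\<forall>p\<in>set (rD x). \<forall>n>N2. T n (snd p) = 0" using vanish_list[of "rD x" snd] by blast
  let ?N = "max N1 N2"
  have "E x = (\<Sum>n<Suc ?N. T (Suc n) x)" by (rule E_eq) (use N1 in auto)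
  also have "\<dots> = x + (\<Sum>n<?N. T (Suc (Suc n)) x)" unfolding sum.lessThan_Suc_shift by simp
  also have "\<dots> = x + (\<Sum>n<?N. - (\<Sum>(a, b)\<leftarrow>rD x. gt a (T (Suc n) b)))"
    by (intro arg_cong[where f="\<lambda>s. x + s"] sum.cong refl T_Suc) simp
  finally have e1: "E x = x - (\<Sum>n<?N. (\<Sum>(a, b)\<leftarrow>rD x. gt a (T (Suc n) b)))"
    by (simp add: sum_negf)
  have "(\<Sum>(a, b)\<leftarrow>rD x. gt a (E b)) = (\<Sum>(a, b)\<leftarrow>rD x. gt a (\<Sum>n<?N. T (Suc n) b))"
  proof (rule arg_cong[where f=sum_list], rule map_cong[OF refl])
    fix p assume p: "p \<in> set (rD x)"
    obtain a b where ab: "p = (a, b)" by force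
    have "E b = (\<Sum>n<?N. T (Suc n) b)" by (rule E_eq) (use N2 p ab in auto)
    then show "(case p of (a, b) \<Rightarrow> gt a (E b)) = (case p of (a, b) \<Rightarrow> gt a (\<Sum>n<?N. T (Suc n) b))"
      using ab by simp
  qed
  also have "\<dots> = (\<Sum>n<?N. (\<Sum>(a, b)\<leftarrow>rD x. gt a (T (Suc n) b)))"
    by (simp add: gt_sum_set swap_sum)
  finally show ?thesis using e1 by simp
qed

theorem E_prim: "primitive sc Delta x \<Longrightarrow> E x = x"
  using E_rec[of x] teq_sum_vec[OF vs prim_rD bil_E] by simp

end


lemma sum_list_concat_map: "(\<Sum>x\<leftarrow>concat xs. f x) = (\<Sum>l\<leftarrow>xs. \<Sum>x\<leftarrow>l. f x)"
  by (induct xs) auto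

lemma fst_sum_list: "fst (\<Sum>x\<leftarrow>xs. f x) = (\<Sum>x\<leftarrow>xs. fst (f x))"
  by (induct xs) auto
lemma snd_sum_list: "snd (\<Sum>x\<leftarrow>xs. f x) = (\<Sum>x\<leftarrow>xs. snd (f x))"
  by (induct xs) auto
lemma pair0_sum_list: "(\<Sum>x\<leftarrow>xs. (f x, 0::'b::monoid_add)) = ((\<Sum>x\<leftarrow>xs. f x), 0)"
  by (induct xs) (auto simp: zero_prod_def)

context qtb begin

lemma cu1: "(\<Sum>(a, b)\<leftarrow>Delta (x, 0). psc sc (snd a) b) = (x, 0)"
  using bialg unfolding q_tridendriform_bialgebra_def by blast
lemma cu2: "(\<Sum>(a, b)\<leftarrow>Delta (x, 0). psc sc (snd b) a) = (x, 0)"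
  using bialg unfolding q_tridendriform_bialgebra_def by blast

definition Dl :: "'h \<Rightarrow> (('h \<times> 'k) \<times> ('h \<times> 'k)) list" where
  "Dl y = ((y, 0), (0, 1)) # ((0, 1), (y, 0)) # map (\<lambda>(a, b). ((a, 0), (b, 0))) (rD y)"

lemma psc01: "psc sc c (0, 1) = (0, c)" by (simp add: psc_def)

lemma Delta_decomp: "teq (psc sc) (psc sc) (Delta (y, 0)) (Dl y)"
  unfolding teq_def
proof (intro allI impI)
  fix \<beta> :: "'h \<times> 'k \<Rightarrow> 'h \<times> 'k \<Rightarrow> 'k" assume b: "bilin (psc sc) (psc sc) (*) \<beta>"
  have dec: "\<beta> a c = \<beta> (fst a, 0) (fst c, 0) + \<beta> (0, 1) (sc (snd a) (fst c), 0) + \<beta> (psc sc (snd c) a) (0, 1)"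
    for a c
  proof -
    have ea: "a = (fst a, 0) + psc sc (snd a) (0, 1)" by (simp add: psc01)
    have ec: "c = (fst c, 0) + psc sc (snd c) (0, 1)" by (simp add: psc01)
    have "\<beta> a c = \<beta> a (fst c, 0) + snd c * \<beta> a (0, 1)"
      by (subst ec) (simp add: bilin_r[OF b] bilin_sr[OF b])
    also have "\<beta> a (fst c, 0) = \<beta> (fst a, 0) (fst c, 0) + snd a * \<beta> (0, 1) (fst c, 0)"
      by (subst ea) (simp add: bilin_l[OF b] bilin_sl[OF b])
    also have "snd a * \<beta> (0, 1) (fst c, 0) = \<beta> (0, 1) (sc (snd a) (fst c), 0)"
      using bilin_sr[OF b, of "(0, 1)" "snd a" "(fst c, 0)"] by (simp add: psc_def)
    also have "snd c * \<beta> a (0, 1) = \<beta> (psc sc (snd c) a) (0, 1)"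
      using bilin_sl[OF b] by simp
    finally show ?thesis by (simp add: add.assoc)
  qed
  let ?D = "Delta (y, 0)"
  have "(\<Sum>(a, c)\<leftarrow>?D. \<beta> a c) = (\<Sum>(a, c)\<leftarrow>?D. \<beta> (fst a, 0) (fst c, 0)) +
      (\<Sum>(a, c)\<leftarrow>?D. \<beta> (0, 1) (sc (snd a) (fst c), 0)) + (\<Sum>(a, c)\<leftarrow>?D. \<beta> (psc sc (snd c) a) (0, 1))"
  proof -
    have "(\<Sum>(a, c)\<leftarrow>?D. \<beta> a c) = (\<Sum>p\<leftarrow>?D. \<beta> (fst (fst p), 0) (fst (snd p), 0) +
      \<beta> (0, 1) (sc (snd (fst p)) (fst (snd p)), 0) + \<beta> (psc sc (snd (snd p)) (fst p)) (0, 1))"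
      unfolding split_def by (rule arg_cong[where f=sum_list], rule map_cong[OF refl], rule dec)
    then show ?thesis by (simp only: sum_list_addf split_def)
  qed
  also have "(\<Sum>(a, c)\<leftarrow>?D. \<beta> (0, 1) (sc (snd a) (fst c), 0)) = \<beta> (0, 1) (y, 0)"
  proof -
    have "(\<Sum>(a, c)\<leftarrow>?D. \<beta> (0, 1) (sc (snd a) (fst c), 0)) = \<beta> (0, 1) (\<Sum>(a, c)\<leftarrow>?D. (sc (snd a) (fst c), 0))"
      using bilin_sum_r[OF b, of "(0,1)" "\<lambda>p. (sc (snd (fst p)) (fst (snd p)), 0)" ?D] by (simp add: split_def)
    also have "(\<Sum>(a, c)\<leftarrow>?D. (sc (snd a) (fst c), 0)) = (y, 0)"
    proof -
      have "fst (\<Sum>(a, c)\<leftarrow>?D. psc sc (snd a) c) = y" using cu1[of y] by simp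
      then have "(\<Sum>(a, c)\<leftarrow>?D. sc (snd a) (fst c)) = y"
        by (simp add: fst_sum_list split_def psc_def)
      then show ?thesis using pair0_sum_list[of "\<lambda>p. sc (snd (fst p)) (fst (snd p))" ?D]
        by (simp add: split_def)
    qed
    finally show ?thesis .
  qed
  also have "(\<Sum>(a, c)\<leftarrow>?D. \<beta> (psc sc (snd c) a) (0, 1)) = \<beta> (y, 0) (0, 1)"
    using bilin_sum_l[OF b, of "\<lambda>p. psc sc (snd (snd p)) (fst p)" ?D "(0,1)"] cu2[of y]
    by (simp add: split_def)
  finally show "(\<Sum>(a, c)\<leftarrow>?D. \<beta> a c) = (\<Sum>(a, c)\<leftarrow>Dl y. \<beta> a c)"
    unfolding Dl_def rDelta_def by (simp add: split_def o_def algebra_simps)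
qed

definition Gf :: "('h \<Rightarrow> 'h \<Rightarrow> 'h) \<Rightarrow> 'h \<times> 'k \<Rightarrow> 'h \<times> 'k \<Rightarrow> 'h \<times> 'k \<Rightarrow> 'h \<times> 'k \<Rightarrow> 'h" where
  "Gf \<Phi> a b c d = \<Phi> (fst (pstar sc q lt dt gt a c)) (gt (fst b) (fst d))
      + sc (snd b) (\<Phi> (fst (pstar sc q lt dt gt a c)) (fst d))"

lemma compat_gt: "compat sc q lt dt gt Delta gt False True"
  using bialg unfolding q_tridendriform_bialgebra_def by blast

lemma compat_gt_sum:
  assumes b: "bilin sc sc sc \<Phi>"
  shows "(\<Sum>(a, c)\<leftarrow>rD (gt y z). \<Phi> a c) = (\<Sum>(a, b)\<leftarrow>Delta (y, 0). \<Sum>(c, d)\<leftarrow>Delta (z, 0). Gf \<Phi> a b c d)"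
proof -
  let ?C = "concat (map (\<lambda>ab. concat (map (\<lambda>cd. compat_term sc q lt dt gt gt False True ab cd)
                                       (Delta (z, 0)))) (Delta (y, 0)))"
  have t: "teq sc sc (rD (gt y z)) (map (\<lambda>(a, b). (fst a, fst b)) ?C)"
    using teq_proj[of sc "Delta (gt y z, 0)" ?C] compat_gt unfolding compat_def rDelta_def by blast
  have "(\<Sum>(a, c)\<leftarrow>rD (gt y z). \<Phi> a c) = (\<Sum>(a, c)\<leftarrow>map (\<lambda>(a, b). (fst a, fst b)) ?C. \<Phi> a c)"
    using teq_sum_vec[OF vs t b] .
  also have "\<dots> = (\<Sum>p\<leftarrow>?C. \<Phi> (fst (fst p)) (fst (snd p)))"
    by (simp add: o_def split_def)
  also have "\<dots> = (\<Sum>(a, b)\<leftarrow>Delta (y, 0). \<Sum>(c, d)\<leftarrow>Delta (z, 0). Gf \<Phi> a b c d)"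
    unfolding sum_list_concat_map map_map o_def
    by (simp add: split_def compat_term_def Let_def Gf_def bilin_zero_r[OF b] bilin_sl[OF b] psc_def add.assoc)
  finally show ?thesis .
qed

lemma lin_pl: "lin (psc sc) sc (\<lambda>a. fst (pstar sc q lt dt gt a c))"
  unfolding lin_def pstar_def star_def psc_def
  by (auto simp: algebra_simps scale_right_distrib scale_left_distrib)

lemma lin_pr: "lin (psc sc) sc (\<lambda>c. fst (pstar sc q lt dt gt a c))"
  unfolding lin_def pstar_def star_def psc_def
  by (auto simp: algebra_simps scale_right_distrib scale_left_distrib)

lemma lin_fst: "lin (psc sc) sc fst"
  unfolding lin_def psc_def by auto
lemma lin_snd: "lin (psc sc) (*) snd"
  unfolding lin_def psc_def by auto
lemma lin_gtfst_l: "lin (psc sc) sc (\<lambda>b. gt (fst b) d)"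
  unfolding lin_def psc_def by auto
lemma lin_gtfst_r: "lin (psc sc) sc (\<lambda>b. gt a (fst b))"
  unfolding lin_def psc_def by auto

lemma bil_G1:
  assumes b: "bilin sc sc sc \<Phi>"
  shows "bilin (psc sc) (psc sc) sc (\<lambda>a b. Gf \<Phi> a b c d)"
proof -
  have bP: "bilin sc (*) sc (\<lambda>u k. sc k (\<Phi> u (fst d)))"
    using b unfolding bilin_def by (auto simp: scale_right_distrib scale_left_distrib)
  have b1: "bilin (psc sc) (psc sc) sc (\<lambda>u v. \<Phi> (fst (pstar sc q lt dt gt u c)) (gt (fst v) (fst d)))"
    by (rule bilin_comp[OF b lin_pl lin_gtfst_l])
  have b2: "bilin (psc sc) (psc sc) sc (\<lambda>u v. sc (snd v) (\<Phi> (fst (pstar sc q lt dt gt u c)) (fst d)))"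
    using bilin_comp[OF bP lin_pl lin_snd] .
  show ?thesis unfolding Gf_def by (rule bilin_add[OF vs b1 b2])
qed

lemma bil_G2:
  assumes b: "bilin sc sc sc \<Phi>"
  shows "bilin (psc sc) (psc sc) sc (\<lambda>c d. Gf \<Phi> a b c d)"
proof -
  have b1: "bilin (psc sc) (psc sc) sc (\<lambda>u v. \<Phi> (fst (pstar sc q lt dt gt a u)) (gt (fst b) (fst v)))"
    by (rule bilin_comp[OF b lin_pr lin_gtfst_r])
  have b2: "bilin (psc sc) (psc sc) sc (\<lambda>u v. \<Phi> (fst (pstar sc q lt dt gt a u)) (fst v))"
    by (rule bilin_comp[OF b lin_pr lin_fst])
  show ?thesis unfolding Gf_def by (rule bilin_add[OF vs b1 bilin_scale[OF vs b2]])
qed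

lemma full_sum:
  assumes b: "bilin sc sc sc \<Phi>"
  shows "(\<Sum>(a, c)\<leftarrow>rD (gt y z). \<Phi> a c) = (\<Sum>(a, b)\<leftarrow>Dl y. \<Sum>(c, d)\<leftarrow>Dl z. Gf \<Phi> a b c d)"
proof -
  have inner: "(\<Sum>(c, d)\<leftarrow>Delta (z, 0). Gf \<Phi> a b c d) = (\<Sum>(c, d)\<leftarrow>Dl z. Gf \<Phi> a b c d)" for a b
    by (rule teq_sum_vec[OF vs Delta_decomp bil_G2[OF b]])
  have bo: "bilin (psc sc) (psc sc) sc (\<lambda>a b. \<Sum>p\<leftarrow>Dl z. Gf \<Phi> a b (fst p) (snd p))"
    by (rule bilin_sum_list[OF vs]) (rule bil_G1[OF b])
  have "(\<Sum>(a, c)\<leftarrow>rD (gt y z). \<Phi> a c) = (\<Sum>(a, b)\<leftarrow>Delta (y, 0). \<Sum>(c, d)\<leftarrow>Dl z. Gf \<Phi> a b c d)"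
    unfolding compat_gt_sum[OF b] inner ..
  also have "\<dots> = (\<Sum>(a, b)\<leftarrow>Dl y. \<Sum>(c, d)\<leftarrow>Dl z. Gf \<Phi> a b c d)"
    using teq_sum_vec[OF vs Delta_decomp bo] by (simp add: split_def)
  finally show ?thesis .
qed

lemma star0[simp]: "star sc q lt dt gt 0 x = 0" "star sc q lt dt gt x 0 = 0"
  unfolding star_def by auto

lemma explicit_sum:
  assumes b: "bilin sc sc sc \<Phi>"
  shows "(\<Sum>(a, b)\<leftarrow>Dl y. \<Sum>(c, d)\<leftarrow>Dl z. Gf \<Phi> a b c d) =
    \<Phi> y z + (\<Sum>(c, d)\<leftarrow>rD z. \<Phi> (star sc q lt dt gt y c) d) + (\<Sum>(c, d)\<leftarrow>rD z. \<Phi> c (gt y d))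
    + (\<Sum>(a, b)\<leftarrow>rD y. \<Phi> a (gt b z) + (\<Sum>(c, d)\<leftarrow>rD z. \<Phi> (star sc q lt dt gt a c) (gt b d)))"
  unfolding Dl_def
  by (simp add: Gf_def pstar_def split_def o_def bilin_zero_r[OF b] bilin_zero_l[OF b] add.assoc)

abbreviation "st \<equiv> star sc q lt dt gt"

lemma ax3': "gt (st a b) c = gt a (gt b c)"
  using ax3[of a b c] by (simp add: star_def add_ac)

lemma lin_gtl: "lin sc sc (\<lambda>b. gt b z)"
  unfolding lin_def by auto
lemma lin_gtr: "lin sc sc (\<lambda>b. gt y b)"
  unfolding lin_def by auto


lemma gt_diff_r[simp]: "gt a (x - y) = gt a x - gt a y"
  by (metis diff_conv_add_uminus gt_neg_r bilin_r[OF bil_gt])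

lemma lin_stl: "lin sc sc (\<lambda>a. st a c)"
  unfolding lin_def star_def by (auto simp: scale_right_distrib)
lemma lin_str: "lin sc sc (\<lambda>c. st a c)"
  unfolding lin_def star_def by (auto simp: scale_right_distrib)

lemma E_gt: "y \<in> filt sc Delta i \<Longrightarrow> z \<in> filt sc Delta j \<Longrightarrow> E (gt y z) = 0"
proof (induct "i + j" arbitrary: i j y z rule: less_induct)
  case less
  define \<Phi> where "\<Phi> = (\<lambda>a b. gt a (E b))"
  have b: "bilin sc sc sc \<Phi>" unfolding \<Phi>_def by (rule bil_E)
  obtain Ty where Ty: "teq sc sc (rD y) Ty" "set Ty \<subseteq> filt sc Delta (i - 1) \<times> filt sc Delta (i - 1)"
    using filt_rep[OF less(2)] by auto
  obtain Tz where Tz: "teq sc sc (rD z) Tz" "set Tz \<subseteq> filt sc Delta (j - 1) \<times> filt sc Delta (j - 1)"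
    using filt_rep[OF less(3)] by auto
  have i: "i \<ge> 1" using less(2) by (cases i) auto
  have j: "j \<ge> 1" using less(3) by (cases j) auto
  have X3: "(\<Sum>(c, d)\<leftarrow>rD z. \<Phi> c (gt y d)) = 0"
  proof -
    have "(\<Sum>(c, d)\<leftarrow>rD z. \<Phi> c (gt y d)) = (\<Sum>(c, d)\<leftarrow>Tz. \<Phi> c (gt y d))"
      by (rule teq_sum_vec[OF vs Tz(1) bilin_comp[OF b lin_id lin_gtr]])
    also have "\<dots> = 0"
    proof (rule sum_list_zeros)
      fix p assume p: "p \<in> set Tz"
      then have "snd p \<in> filt sc Delta (j - 1)" using Tz(2) by auto
      then have "E (gt y (snd p)) = 0" using less(1)[of i "j - 1" y "snd p"] less(2) j by auto
      then show "(case p of (c, d) \<Rightarrow> \<Phi> c (gt y d)) = 0" by (simp add: \<Phi>_def split_def)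
    qed
    finally show ?thesis .
  qed
  have X4: "(\<Sum>(a, b)\<leftarrow>rD y. \<Phi> a (gt b z) + (\<Sum>(c, d)\<leftarrow>rD z. \<Phi> (st a c) (gt b d))) = 0"
  proof -
    have bb: "bilin sc sc sc (\<lambda>a b. \<Phi> a (gt b z) + (\<Sum>p\<leftarrow>rD z. \<Phi> (st a (fst p)) (gt b (snd p))))"
      by (rule bilin_add[OF vs bilin_comp[OF b lin_id lin_gtl] bilin_sum_list[OF vs]])
        (rule bilin_comp[OF b lin_stl lin_gtl])
    have "(\<Sum>(a, b)\<leftarrow>rD y. \<Phi> a (gt b z) + (\<Sum>(c, d)\<leftarrow>rD z. \<Phi> (st a c) (gt b d)))
        = (\<Sum>(a, b)\<leftarrow>Ty. \<Phi> a (gt b z) + (\<Sum>(c, d)\<leftarrow>rD z. \<Phi> (st a c) (gt b d)))"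
      using teq_sum_vec[OF vs Ty(1) bb] by (simp add: split_def)
    also have "\<dots> = 0"
    proof (rule sum_list_zeros)
      fix p assume p: "p \<in> set Ty"
      obtain a bb where ab: "p = (a, bb)" by force
      have bf: "bb \<in> filt sc Delta (i - 1)" using Ty(2) p ab by auto
      have e1: "E (gt bb z) = 0" using less(1)[of "i - 1" j bb z] bf less(3) i by auto
      have "(\<Sum>(c, d)\<leftarrow>rD z. \<Phi> (st a c) (gt bb d)) = (\<Sum>(c, d)\<leftarrow>Tz. \<Phi> (st a c) (gt bb d))"
        by (rule teq_sum_vec[OF vs Tz(1) bilin_comp[OF b lin_str lin_gtr]])
      also have "\<dots> = 0"
      proof (rule sum_list_zeros)
        fix p' assume p': "p' \<in> set Tz"
        then have "snd p' \<in> filt sc Delta (j - 1)" using Tz(2) by auto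
        then have "E (gt bb (snd p')) = 0" using less(1)[of "i - 1" "j - 1" bb "snd p'"] bf i j by auto
        then show "(case p' of (c, d) \<Rightarrow> \<Phi> (st a c) (gt bb d)) = 0" by (simp add: \<Phi>_def split_def)
      qed
      finally show "(case p of (a, b) \<Rightarrow> \<Phi> a (gt b z) + (\<Sum>(c, d)\<leftarrow>rD z. \<Phi> (st a c) (gt b d))) = 0"
        using ab e1 by (simp add: \<Phi>_def)
    qed
    finally show ?thesis .
  qed
  have X1: "\<Phi> y z = gt y z - (\<Sum>(c, d)\<leftarrow>rD z. \<Phi> (st y c) d)"
  proof -
    have "\<Phi> y z = gt y z - gt y (\<Sum>(c, d)\<leftarrow>rD z. gt c (E d))"
      unfolding \<Phi>_def by (subst E_rec) simp
    also have "gt y (\<Sum>(c, d)\<leftarrow>rD z. gt c (E d)) = (\<Sum>(c, d)\<leftarrow>rD z. \<Phi> (st y c) d)"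
      by (simp add: gt_sum_r split_def \<Phi>_def ax3')
    finally show ?thesis .
  qed
  have "(\<Sum>(a, c)\<leftarrow>rD (gt y z). \<Phi> a c) = gt y z"
    unfolding full_sum[OF b] explicit_sum[OF b] X3 X4 X1 by simp
  then show ?case using E_rec[of "gt y z"] unfolding \<Phi>_def by simp
qed

end

theorem mainTheorem3:
  fixes sc :: "'k::field \<Rightarrow> 'h::ab_group_add \<Rightarrow> 'h"
    and q :: 'k
    and lt dt gt :: "'h \<Rightarrow> 'h \<Rightarrow> 'h"
    and Delta :: "'h \<times> 'k \<Rightarrow> (('h \<times> 'k) \<times> ('h \<times> 'k)) list"
  assumes "q_tridendriform_bialgebra sc q lt dt gt Delta"
    and "connected_bialg sc Delta"
  shows "(\<forall>x. e_tri sc gt Delta x = x - (\<Sum>(a, b)\<leftarrow>rDelta Delta x. gt a (e_tri sc gt Delta b)))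
       \<and> (\<forall>x. primitive sc Delta x \<longrightarrow> e_tri sc gt Delta x = x)
       \<and> (\<forall>y z. e_tri sc gt Delta (gt y z) = 0)"
proof -
  interpret qtb sc q lt dt gt Delta using assms by unfold_locales
  have "\<forall>y z. e_tri sc gt Delta (gt y z) = 0"
  proof (intro allI)
    fix y z
    obtain i where "y \<in> filt sc Delta i" using assms(2) unfolding connected_bialg_def by blast
    moreover obtain j where "z \<in> filt sc Delta j" using assms(2) unfolding connected_bialg_def by blast
    ultimately show "e_tri sc gt Delta (gt y z) = 0" by (rule E_gt)
  qed
  then show ?thesis using E_rec E_prim by blast
qed

end
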